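(* Let $f:(0,\infty)\to(0,\infty)$ be non-increasing such that $t\mapsto t^2f(t)$ is non-decreasing, let $a\ge0$, $c>0$, and define \[ F(r):=\int_0^\infty t^{-a}e^{-\frac{r^2}{c^2t}}f(t)\,dt,\qquad r>0. \] If $a\le1$, assume additionally that there exist constants $c'>0$, $\gamma'>1-a$ and $R\ge0$ such that $\frac{f(tx)}{f(t)}\le c'x^{-\gamma'}$ for all $t>R$ and $x\ge1$. Then \[ F(r)\asymp r^{-2a+2}f(r^2)\quad\text{for all } r>R_0, \] where $R_0:=\sqrt R$ if $a\le1$ and $R_0:=0$ if $a>1$.
   Context: $g(r)\asymp h(r)$ for $r\in I$ means that $g(r)/h(r)$ stays between two positive constants (independent of $r$) for all $r\in I$. *)

theory Defs
  imports "HOL-Analysis.Analysis"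
begin

text \<open>F(r) = integral over (0,inf) of t^(-a) exp(-r^2/(c^2 t)) f(t) dt, taken as a
nonnegative (extended real) Lebesgue integral, so it is always defined.\<close>
definition Fint :: "real \<Rightarrow> real \<Rightarrow> (real \<Rightarrow> real) \<Rightarrow> real \<Rightarrow> ennreal" where
  "Fint a c f r = (\<integral>\<^sup>+ t. indicator {0<..} t *
      ennreal (t powr (-a) * exp (-(r^2) / (c^2 * t)) * f t) \<partial>lborel)"

end

theory Submission imports Defs begin

lemma xpow_exp_bound:
  fixes x p :: real assumes "x > 0" "p > 0"
  shows "x powr p * exp (-x) \<le> p powr p * exp (-p)"
proof -
  have "ln (x/p) \<le> x/p - 1" using assms by (intro ln_le_minus_one) auto
  then have "ln x - ln p \<le> x/p - 1" using assms by (simp add: ln_div)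
  then have "p * (ln x - ln p) \<le> p * (x/p - 1)" using assms by (intro mult_left_mono) auto
  then have "p * ln x - x \<le> p * ln p - p" using assms by (simp add: algebra_simps)
  then have "exp (p * ln x - x) \<le> exp (p * ln p - p)" by simp
  thus ?thesis using assms by (simp add: powr_def exp_diff exp_minus field_simps)
qed

lemma kernel_bound:
  fixes t q c p :: real assumes "t > 0" "q > 0" "c > 0" "p > 0"
  shows "t powr (-p) * exp (-q/(c^2*t)) \<le> p powr p * exp (-p) * (c^2) powr p * q powr (-p)"
proof -
  define x where "x = q/(c^2*t)"
  have x: "x > 0" using assms by (simp add: x_def)
  have "1/t = c^2 * x / q" using assms by (simp add: x_def field_simps)
  have "t powr (-p) = (1/t) powr p" using assms by (simp add: powr_minus_divide powr_divide)
  also have "\<dots> = (c^2) powr p * x powr p / q powr p"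
    using assms x \<open>1/t = c^2 * x / q\<close> by (simp add: powr_mult powr_divide)
  finally have e: "t powr (-p) = (c^2) powr p * x powr p / q powr p" .
  have "t powr (-p) * exp (-q/(c^2*t)) = (c^2) powr p / q powr p * (x powr p * exp (-x))"
    using e by (simp add: x_def)
  also have "\<dots> \<le> (c^2) powr p / q powr p * (p powr p * exp (-p))"
    by (intro mult_left_mono xpow_exp_bound x assms) auto
  also have "\<dots> = p powr p * exp (-p) * (c^2) powr p * q powr (-p)"
    by (simp add: powr_minus_divide)
  finally show ?thesis .
qed

lemma lower_q:
  fixes f :: "real \<Rightarrow> real" and a c q :: real
  assumes fpos: "\<forall>t>0. f t > 0"
    and fdec: "\<forall>s t. 0 < s \<longrightarrow> s \<le> t \<longrightarrow> f t \<le> f s"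
    and t2finc: "\<forall>s t. 0 < s \<longrightarrow> s \<le> t \<longrightarrow> s^2 * f s \<le> t^2 * f t"
    and a: "a \<ge> 0" and c: "c > 0" and q: "q > 0"
  shows "ennreal ((2 powr (-a) * exp (-1/c^2) / 4) * (q powr (1 - a) * f q)) \<le>
    (\<integral>\<^sup>+ t. indicator {0<..} t * ennreal (t powr (-a) * exp (-q / (c^2 * t)) * f t) \<partial>lborel)"
proof -
  define L where "L = 2 powr (-a) * q powr (-a) * exp (-1/c^2) * (f q / 4)"
  have L0: "L \<ge> 0" using fpos q unfolding L_def by (intro mult_nonneg_nonneg) (auto intro: less_imp_le)
  have pt: "ennreal L * indicator {q..2*q} t \<le>
     indicator {0<..} t * ennreal (t powr (-a) * exp (-q / (c^2 * t)) * f t)" for t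
  proof (cases "t \<in> {q..2*q}")
    case True
    then have t: "q \<le> t" "t \<le> 2*q" "t > 0" using q by auto
    have 1: "2 powr (-a) * q powr (-a) \<le> t powr (-a)"
      using t q a by (simp add: powr_mult[symmetric] powr_mono2')
    have "q / (c^2*t) \<le> 1/c^2" using t q c by (simp add: field_simps)
    then have 2: "exp (-1/c^2) \<le> exp (-q / (c^2 * t))" by simp
    have "q^2 * f q \<le> (2*q)^2 * f (2*q)" by (rule t2finc[rule_format]) (use q in auto)
    then have "q^2 * f q \<le> q^2 * (4 * f (2*q))" by (simp add: power_mult_distrib)
    then have "f q \<le> 4 * f (2*q)" using q by (simp add: mult_le_cancel_left_pos)
    then have "f q / 4 \<le> f (2*q)" using q by (simp add: power2_eq_square field_simps)
    moreover have "f (2*q) \<le> f t" using fdec t by auto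
    ultimately have 3: "f q / 4 \<le> f t" by linarith
    have "L \<le> t powr (-a) * exp (-q / (c^2 * t)) * f t"
      unfolding L_def
      by (intro mult_mono 1 2 3) (use fpos q in auto)
    then show ?thesis using True t by (auto simp: ennreal_leI)
  qed auto
  have "(\<integral>\<^sup>+ t. ennreal L * indicator {q..2*q} t \<partial>lborel) \<le>
     (\<integral>\<^sup>+ t. indicator {0<..} t * ennreal (t powr (-a) * exp (-q / (c^2 * t)) * f t) \<partial>lborel)"
    by (intro nn_integral_mono pt)
  moreover have "(\<integral>\<^sup>+ t. ennreal L * indicator {q..2*q} t \<partial>lborel) = ennreal (L * q)"
    using q L0 by (simp add: nn_integral_cmult_indicator ennreal_mult)
  moreover have "L * q = (2 powr (-a) * exp (-1/c^2) / 4) * (q powr (1 - a) * f q)"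
    using q by (simp add: L_def powr_diff powr_minus field_simps)
  ultimately show ?thesis by simp
qed

lemma powr_m2: fixes t a :: real assumes "t > 0"
  shows "t powr (-(a+2)) = t powr (-a) / t^2"
proof -
  have "t powr (-(a+2)) = t powr (-a) * t powr (-2)" by (simp add: powr_add[symmetric])
  also have "t powr (-2) = 1 / t^2" using assms by (simp add: powr_minus_divide powr_realpow)
  finally show ?thesis by simp
qed

lemma powr_comb: fixes t q a b :: real assumes "t > 0" "q > 0"
  shows "t powr (-a) * (t/q) powr (a - b) = q powr (b-a) * t powr (-b)"
proof -
  have 1: "(t/q) powr (a - b) = t powr (a-b) / q powr (a-b)" using assms by (simp add: powr_divide)
  have 2: "t powr (-a) * t powr (a-b) = t powr (-b)" by (simp add: powr_add[symmetric])
  have 3: "q powr (b-a) = 1 / q powr (a-b)" using powr_minus_divide[of q "a-b"] by simp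
  show ?thesis unfolding 1 3 using 2 by (simp add: field_simps)
qed

lemma powr_1a: fixes q a :: real assumes "q > 0"
  shows "q powr (1 - a) = q * q powr (-a)"
proof -
  have "q powr (1 - a) = q powr (1 + (-a))" by simp
  also have "\<dots> = q powr 1 * q powr (-a)" by (rule powr_add)
  also have "q powr 1 = q" using assms by simp
  finally show ?thesis .
qed

lemma powr_ba: fixes q a b :: real assumes "q > 0"
  shows "q powr (b - a) * q powr (-b+1) = q powr (1 - a)"
  by (simp add: powr_add[symmetric])

lemma upper_q:
  fixes f :: "real \<Rightarrow> real" and a b c q K :: real
  assumes fpos: "\<forall>t>0. f t > 0"
    and t2finc: "\<forall>s t. 0 < s \<longrightarrow> s \<le> t \<longrightarrow> s^2 * f s \<le> t^2 * f t"
    and a: "a \<ge> 0" and c: "c > 0" and q: "q > 0" and b: "b > 1" and K: "K \<ge> 0"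
    and tail: "\<forall>t\<ge>q. f t \<le> K * f q * (t/q) powr (a - b)"
  shows "(\<integral>\<^sup>+ t. indicator {0<..} t * ennreal (t powr (-a) * exp (-q / (c^2 * t)) * f t) \<partial>lborel)
     \<le> ennreal (((a+2) powr (a+2) * exp (-(a+2)) * (c^2) powr (a+2) + K/(b-1)) * (q powr (1 - a) * f q))"
proof -
  define P where "P = (a+2) powr (a+2) * exp (-(a+2)) * (c^2) powr (a+2)"
  define A where "A = P * f q * q powr (-a)"
  define B where "B = K * f q * q powr (b-a)"
  have P0: "P \<ge> 0" unfolding P_def by simp
  have fq: "f q > 0" using fpos q by auto
  have A0: "A \<ge> 0" unfolding A_def using P0 fq by simp
  have B0: "B \<ge> 0" unfolding B_def using K fq by simp
  have pt: "indicator {0<..} t * ennreal (t powr (-a) * exp (-q / (c^2 * t)) * f t) \<le>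
     ennreal A * indicator {0..q} t + ennreal (B * t powr (-b)) * indicator {q..} t" for t
  proof -
    consider "t \<le> 0" | "0 < t" "t \<le> q" | "q < t" by linarith
    then show ?thesis
    proof cases
      case 1 then show ?thesis by simp
    next
      case 2
      have "t^2 * f t \<le> q^2 * f q" by (rule t2finc[rule_format]) (use 2 in auto)
      then have ft: "f t \<le> q^2 * f q / t^2" using 2 by (simp add: field_simps)
      have e0: "0 \<le> t powr (-a) * exp (-q / (c^2 * t))" by simp
      have "t powr (-a) * exp (-q / (c^2 * t)) * f t \<le> t powr (-a) * exp (-q / (c^2 * t)) * (q^2 * f q / t^2)"
        by (intro mult_left_mono ft e0)
      also have "\<dots> = q^2 * f q * (t powr (-(a+2)) * exp (-q / (c^2 * t)))"
        using 2 unfolding powr_m2[OF \<open>0<t\<close>] by (simp add: field_simps)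
      also have "\<dots> \<le> q^2 * f q * (P * q powr (-(a+2)))"
      proof -
        have "t powr (-(a+2)) * exp (-q / (c^2 * t)) \<le> P * q powr (-(a+2))"
          unfolding P_def using kernel_bound[of t q c "a+2"] 2 q c a by simp
        then show ?thesis using fq by (intro mult_left_mono) auto
      qed
      also have "\<dots> = A"
        unfolding A_def powr_m2[OF q] using q by (simp add: field_simps)
      finally have "t powr (-a) * exp (-q / (c^2 * t)) * f t \<le> A" .
      then have "ennreal (t powr (-a) * exp (-q / (c^2 * t)) * f t) \<le> ennreal A" by (rule ennreal_leI)
      also have "ennreal A \<le> ennreal A * indicator {0..q} t + ennreal (B * t powr (-b)) * indicator {q..} t"
        using 2 by (auto simp: indicator_def intro: add_increasing2)
      finally show ?thesis using 2 by simp
    next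
      case 3
      have e1: "exp (-q / (c^2 * t)) \<le> 1" using 3 q c by simp
      have ft: "f t \<le> K * f q * (t/q) powr (a - b)" using tail 3 by auto
      have "t powr (-a) * exp (-q / (c^2 * t)) * f t \<le> t powr (-a) * 1 * f t"
      proof -
        have "f t > 0" using fpos 3 q by auto
        then show ?thesis using e1 by (intro mult_right_mono mult_left_mono) auto
      qed
      also have "\<dots> \<le> t powr (-a) * (K * f q * (t/q) powr (a - b))"
        using ft by (simp add: mult_left_mono)
      also have "\<dots> = B * t powr (-b)"
        unfolding B_def using 3 q
        using powr_comb[of t q a b] by (simp add: algebra_simps)
      finally have "t powr (-a) * exp (-q / (c^2 * t)) * f t \<le> B * t powr (-b)" .
      then show ?thesis using 3 q by (auto simp: ennreal_leI indicator_def)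
    qed
  qed
  have int1: "(\<integral>\<^sup>+ t. ennreal A * indicator {0..q} t \<partial>lborel) = ennreal (A * q)"
    using q A0 by (simp add: nn_integral_cmult_indicator ennreal_mult)
  have "((\<lambda>x. x powr (-b)) has_integral -(q powr (-b+1)) / (-b+1)) {q..}"
    using has_integral_powr_to_inf[of "-b" q] b q by simp
  then have "((\<lambda>x. B * x powr (-b)) has_integral B * (-(q powr (-b+1)) / (-b+1))) {q..}"
    by (rule has_integral_mult_right)
  then have int2: "(\<integral>\<^sup>+ t. ennreal (B * t powr (-b)) * indicator {q..} t \<partial>lborel)
      = ennreal (B * (-(q powr (-b+1)) / (-b+1)))"
    using B0 by (intro nn_integral_has_integral_lebesgue') auto
  have "(\<integral>\<^sup>+ t. indicator {0<..} t * ennreal (t powr (-a) * exp (-q / (c^2 * t)) * f t) \<partial>lborel)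
     \<le> (\<integral>\<^sup>+ t. ennreal A * indicator {0..q} t + ennreal (B * t powr (-b)) * indicator {q..} t \<partial>lborel)"
    by (intro nn_integral_mono pt)
  also have "\<dots> = (\<integral>\<^sup>+ t. ennreal A * indicator {0..q} t \<partial>lborel) +
     (\<integral>\<^sup>+ t. ennreal (B * t powr (-b)) * indicator {q..} t \<partial>lborel)"
    by (intro nn_integral_add) measurable
  also have "\<dots> = ennreal (A * q + B * (-(q powr (-b+1)) / (-b+1)))"
    unfolding int1 int2 using A0 B0 q b
    by (subst ennreal_plus) (auto intro!: divide_nonneg_nonpos)
  also have "A * q + B * (-(q powr (-b+1)) / (-b+1)) = (P + K/(b-1)) * (q powr (1 - a) * f q)"
  proof -
    have "A * q = P * (q powr (1 - a) * f q)"
      unfolding A_def powr_1a[OF q] by (simp add: algebra_simps)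
    moreover have "B * (-(q powr (-b+1)) / (-b+1)) = K/(b-1) * (q powr (1 - a) * f q)"
    proof -
      have "B * (-(q powr (-b+1)) / (-b+1)) = K * f q * (q powr (b-a) * q powr (-b+1)) / (b-1)"
        unfolding B_def using b by (simp add: field_simps)
      also have "\<dots> = K/(b-1) * (q powr (1 - a) * f q)" unfolding powr_ba[OF q] by simp
      finally show ?thesis .
    qed
    ultimately show ?thesis by (simp add: algebra_simps)
  qed
  finally show ?thesis unfolding P_def .
qed

theorem lemmaA2:
  fixes f :: "real \<Rightarrow> real" and a c R :: real
  assumes fpos: "\<forall>t>0. f t > 0"
    and fdec: "\<forall>s t. 0 < s \<longrightarrow> s \<le> t \<longrightarrow> f t \<le> f s"
    and t2finc: "\<forall>s t. 0 < s \<longrightarrow> s \<le> t \<longrightarrow> s^2 * f s \<le> t^2 * f t"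
    and a: "a \<ge> 0" and c: "c > 0"
    and R: "R \<ge> 0"
    and reg: "a \<le> 1 \<Longrightarrow> (\<exists>c'>0. \<exists>\<gamma>'>1 - a. \<forall>t>R. \<forall>x\<ge>1.
                 f (t * x) / f t \<le> c' * x powr (-\<gamma>'))"
  shows "\<exists>C1>0. \<exists>C2>0. \<forall>r > (if a \<le> 1 then sqrt R else 0).
           ennreal (C1 * (r powr (2 - 2 * a) * f (r^2))) \<le> Fint a c f r \<and>
           Fint a c f r \<le> ennreal (C2 * (r powr (2 - 2 * a) * f (r^2)))"
proof -
  have ex: "\<exists>b K. b > 1 \<and> K \<ge> 0 \<and> (\<forall>q. (a \<le> 1 \<longrightarrow> q > R) \<longrightarrow> q > 0 \<longrightarrow>
              (\<forall>t\<ge>q. f t \<le> K * f q * (t/q) powr (a - b)))"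
  proof (cases "a \<le> 1")
    case True
    from reg[OF True] obtain c' \<gamma>' where c': "c' > 0" and g: "\<gamma>' > 1 - a"
      and h: "\<forall>t>R. \<forall>x\<ge>1. f (t * x) / f t \<le> c' * x powr (-\<gamma>')" by blast
    have "\<forall>q. (a \<le> 1 \<longrightarrow> q > R) \<longrightarrow> q > 0 \<longrightarrow>
              (\<forall>t\<ge>q. f t \<le> c' * f q * (t/q) powr (a - (a + \<gamma>')))"
    proof (intro allI impI)
      fix q t assume q1: "a \<le> 1 \<longrightarrow> q > R" and q: "q > 0" and t: "t \<ge> q"
      have "f (q * (t/q)) / f q \<le> c' * (t/q) powr (-\<gamma>')"
      proof (rule h[rule_format])
        show "R < q" using q1 True by auto
        show "1 \<le> t/q" using t q by simp
      qed
      moreover have "q * (t/q) = t" using q by simp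
      moreover have "f q > 0" using fpos q by auto
      ultimately show "f t \<le> c' * f q * (t/q) powr (a - (a + \<gamma>'))"
        by (simp add: field_simps)
    qed
    then show ?thesis using c' g by (intro exI[of _ "a + \<gamma>'"] exI[of _ c']) auto
  next
    case False
    have "\<forall>q. (a \<le> 1 \<longrightarrow> q > R) \<longrightarrow> q > 0 \<longrightarrow>
              (\<forall>t\<ge>q. f t \<le> 1 * f q * (t/q) powr (a - a))"
      using fdec by auto
    then show ?thesis using False by (intro exI[of _ a] exI[of _ 1]) auto
  qed
  then obtain b K where b: "b > 1" and K: "K \<ge> 0"
    and tail: "\<And>q. (a \<le> 1 \<longrightarrow> q > R) \<Longrightarrow> q > 0 \<Longrightarrow> (\<forall>t\<ge>q. f t \<le> K * f q * (t/q) powr (a - b))"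
    by blast
  define C1 where "C1 = 2 powr (-a) * exp (-1/c^2) / 4"
  define C2 where "C2 = (a+2) powr (a+2) * exp (-(a+2)) * (c^2) powr (a+2) + K/(b-1)"
  have C1: "C1 > 0" unfolding C1_def by simp
  have C2: "C2 > 0" unfolding C2_def using K b a c
    by (intro add_pos_nonneg) (auto intro!: mult_pos_pos)
  have main: "ennreal (C1 * (r powr (2 - 2 * a) * f (r^2))) \<le> Fint a c f r \<and>
           Fint a c f r \<le> ennreal (C2 * (r powr (2 - 2 * a) * f (r^2)))"
    if r: "r > (if a \<le> 1 then sqrt R else 0)" for r
  proof -
    have r0: "r > 0"
    proof (cases "a \<le> 1")
      case True
      then have "sqrt R < r" using r by simp
      moreover have "sqrt R \<ge> 0" using R by simp
      ultimately show ?thesis by linarith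
    next
      case False then show ?thesis using r by simp
    qed
    have rR: "a \<le> 1 \<longrightarrow> r^2 > R"
    proof
      assume "a \<le> 1"
      then have "sqrt R < r" using r by simp
      then have "(sqrt R)^2 < r^2" using R by (intro power_strict_mono) auto
      then show "r^2 > R" using R by simp
    qed
    have q: "r^2 > 0" using r0 by simp
    have pw: "r powr (2 - 2 * a) = (r^2) powr (1 - a)"
    proof -
      have "r^2 = r powr 2" using r0 by (simp add: powr_numeral)
      then have "(r^2) powr (1 - a) = r powr (2 * (1 - a))" by (simp add: powr_powr)
      also have "2 * (1 - a) = 2 - 2 * a" by simp
      finally show ?thesis by simp
    qed
    have F: "Fint a c f r = (\<integral>\<^sup>+ t. indicator {0<..} t * ennreal (t powr (-a) * exp (-(r^2) / (c^2 * t)) * f t) \<partial>lborel)"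
      unfolding Fint_def ..
    have "ennreal (C1 * (r powr (2 - 2 * a) * f (r^2))) \<le> Fint a c f r"
      unfolding F pw C1_def by (rule lower_q[OF fpos fdec t2finc a c q])
    moreover have "Fint a c f r \<le> ennreal (C2 * (r powr (2 - 2 * a) * f (r^2)))"
      unfolding F pw C2_def by (rule upper_q[OF fpos t2finc a c q b K tail[OF rR q]])
    ultimately show ?thesis by blast
  qed
  show ?thesis using main C1 C2 by blast
qed

end
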